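(* Let $\mu$ be a valuation on $\mathrm{Spec}(R)$ and $f\in R$, $f\ge0$. For every natural number $N\ge1$ and all rationals $r<s$ there exist rationals $r',s'$ with $r<r'<s'<s$ such that $\Delta[r',s']<\frac1N$.
   Context: $R$ is a Riesz space over $\mathbb{Q}$ with strong unit $1$; rationals identified with multiples of $1$. $\mathrm{Spec}(R)$ is the distributive lattice generated by $D(a)$, $a\in R$, subject to $D(1)=1$; $D(a)\wedge D(-a)=0$; $D(a+b)\le D(a)\vee D(b)$; $D(a)=0$ if $a\le0$; $D(a\vee b)=D(a)\vee D(b)$. A valuation is a map $\mu$ from $\mathrm{Spec}(R)$ to nonnegative lower reals (inhabited, downward closed, rounded sets of rationals) with $\mu(0)=0$, $\mu(1)=1$, $\mu(x)+\mu(y)=\mu(x\vee y)+\mu(x\wedge y)$, monotone, and $\mu(D(a))\le\bigvee_{\varepsilon>0}\mu(D(a-\varepsilon))$. $\Delta(r,s):=\mu(D(f-r)\wedge D(s-f))$, and $\Delta[r,s]$ is the upper real $1-\mu(D(r-f))-\mu(D(f-s))$; "$\Delta[r',s']<q$" means $q$ belongs to this upper real, i.e. there are rationals $a<\mu(D(r'-f))$, $b<\mu(D(f-s'))$ with $1-a-b<q$. *)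

theory Defs
  imports Main "HOL-Library.Lattice_Algebras"
begin

definition riesz_Q :: "(rat \<Rightarrow> 'a::lattice_ab_group_add \<Rightarrow> 'a) \<Rightarrow> bool" where
  "riesz_Q sc \<longleftrightarrow>
     (\<forall>q x y. sc q (x + y) = sc q x + sc q y) \<and>
     (\<forall>p q x. sc (p + q) x = sc p x + sc q x) \<and>
     (\<forall>p q x. sc (p * q) x = sc p (sc q x)) \<and>
     (\<forall>x. sc 1 x = x) \<and>
     (\<forall>q x. 0 \<le> q \<longrightarrow> 0 \<le> x \<longrightarrow> 0 \<le> sc q x)"

text \<open>Strong unit u; the rational q is identified with sc q u.\<close>
definition strong_unit :: "(rat \<Rightarrow> 'a::lattice_ab_group_add \<Rightarrow> 'a) \<Rightarrow> 'a \<Rightarrow> bool" where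
  "strong_unit sc u \<longleftrightarrow> 0 \<le> u \<and> (\<forall>x. \<exists>n::nat. sup x (- x) \<le> sc (of_nat n) u)"

text \<open>D satisfies the defining relations of Spec(R) in the bounded
  distributive lattice L.\<close>
definition spec_relations ::
  "(rat \<Rightarrow> 'a::lattice_ab_group_add \<Rightarrow> 'a) \<Rightarrow> 'a \<Rightarrow> ('a \<Rightarrow> 'l::{distrib_lattice,bounded_lattice}) \<Rightarrow> bool" where
  "spec_relations sc u D \<longleftrightarrow>
     D u = top \<and>
     (\<forall>a. inf (D a) (D (- a)) = bot) \<and>
     (\<forall>a b. D (a + b) \<le> sup (D a) (D b)) \<and>
     (\<forall>a. a \<le> 0 \<longrightarrow> D a = bot) \<and>
     (\<forall>a b. D (sup a b) = sup (D a) (D b))"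

definition lower_real :: "rat set \<Rightarrow> bool" where
  "lower_real A \<longleftrightarrow> A \<noteq> {} \<and> (\<forall>p q. q \<in> A \<longrightarrow> p < q \<longrightarrow> p \<in> A) \<and> (\<forall>q\<in>A. \<exists>p\<in>A. q < p)"

definition lr_of :: "rat \<Rightarrow> rat set" where
  "lr_of c = {q. q < c}"

definition lr_add :: "rat set \<Rightarrow> rat set \<Rightarrow> rat set" where
  "lr_add A B = {a + b | a b. a \<in> A \<and> b \<in> B}"

text \<open>Valuation on the lattice with values in nonnegative lower reals
  (order on lower reals = inclusion, sup = union).\<close>
definition valuation ::
  "(rat \<Rightarrow> 'a::lattice_ab_group_add \<Rightarrow> 'a) \<Rightarrow> 'a \<Rightarrow> ('a \<Rightarrow> 'l::{distrib_lattice,bounded_lattice})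
     \<Rightarrow> ('l \<Rightarrow> rat set) \<Rightarrow> bool" where
  "valuation sc u D \<mu> \<longleftrightarrow>
     (\<forall>x. lower_real (\<mu> x) \<and> lr_of 0 \<subseteq> \<mu> x) \<and>
     \<mu> bot = lr_of 0 \<and> \<mu> top = lr_of 1 \<and>
     (\<forall>x y. lr_add (\<mu> x) (\<mu> y) = lr_add (\<mu> (sup x y)) (\<mu> (inf x y))) \<and>
     (\<forall>x y. x \<le> y \<longrightarrow> \<mu> x \<subseteq> \<mu> y) \<and>
     (\<forall>a. \<mu> (D a) \<subseteq> (\<Union>\<epsilon>\<in>{\<epsilon>::rat. 0 < \<epsilon>}. \<mu> (D (a - sc \<epsilon> u))))"

text \<open>"Delta[r,s] < q": q lies in the upper real 1 - mu(D(r-f)) - mu(D(f-s)).\<close>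
definition Delta_closed_lt ::
  "(rat \<Rightarrow> 'a::lattice_ab_group_add \<Rightarrow> 'a) \<Rightarrow> 'a \<Rightarrow> ('a \<Rightarrow> 'l::{distrib_lattice,bounded_lattice})
     \<Rightarrow> ('l \<Rightarrow> rat set) \<Rightarrow> 'a \<Rightarrow> rat \<Rightarrow> rat \<Rightarrow> rat \<Rightarrow> bool" where
  "Delta_closed_lt sc u D \<mu> f r s q \<longleftrightarrow>
     (\<exists>a b. a \<in> \<mu> (D (sc r u - f)) \<and> b \<in> \<mu> (D (f - sc s u)) \<and> 1 - a - b < q)"

end

theory Submission
  imports Defs
begin

lemma D_mono: assumes "spec_relations sc u D" "a \<le> b" shows "D a \<le> D b"
proof -
  have "\<forall>a b. D (sup a b) = sup (D a) (D b)" using assms unfolding spec_relations_def by blast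
  then have "D (sup a b) = sup (D a) (D b)" by blast
  moreover have "sup a b = b" using assms(2) by (rule sup_absorb2)
  ultimately have "D b = sup (D a) (D b)" by simp
  thus ?thesis by (metis sup.cobounded1)
qed

lemma sc_zero: assumes "riesz_Q sc" shows "sc 0 x = 0"
proof -
  have "sc (0+0) x = sc 0 x + sc 0 x" using assms unfolding riesz_Q_def by blast
  thus ?thesis by simp
qed

lemma sc_mono: assumes "riesz_Q sc" "0 \<le> u" "(a::rat) \<le> b" shows "sc a u \<le> sc b u"
proof -
  have "\<forall>p q x. sc (p + q) x = sc p x + sc q x" using assms(1) unfolding riesz_Q_def by blast
  then have "sc (a + (b-a)) u = sc a u + sc (b-a) u" by blast
  then have "sc b u = sc a u + sc (b-a) u" by simp
  moreover have "0 \<le> sc (b-a) u" using assms unfolding riesz_Q_def by simp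
  ultimately show ?thesis by (metis add_increasing2 order_refl)
qed

lemma D_nat: assumes "riesz_Q sc" "spec_relations sc u D"
  shows "D (sc (of_nat n) x) \<le> D x"
proof (induction n)
  case 0 then show ?case using assms sc_zero[OF assms(1)] unfolding spec_relations_def by simp
next
  case (Suc n)
  have h: "\<forall>p q x. sc (p + q) x = sc p x + sc q x" "\<forall>x. sc 1 x = x"
    using assms(1) unfolding riesz_Q_def by blast+
  have "sc (1 + of_nat n) x = sc 1 x + sc (of_nat n) x" using h(1) by blast
  then have e: "sc (of_nat (Suc n)) x = sc (of_nat n) x + x" using h(2) by (simp add: add.commute)
  have "\<forall>a b. D (a + b) \<le> sup (D a) (D b)" using assms(2) unfolding spec_relations_def by blast
  then have "D (sc (of_nat n) x + x) \<le> sup (D (sc (of_nat n) x)) (D x)" by blast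
  then have "D (sc (of_nat (Suc n)) x) \<le> sup (D (sc (of_nat n) x)) (D x)" using e by simp
  then show ?case using Suc by (meson le_supI order_trans order_refl)
qed

lemma D_pos_top: assumes "riesz_Q sc" "spec_relations sc u D" "0 \<le> u" "(0::rat) < c"
  shows "D (sc c u) = top"
proof -
  obtain n::nat where n: "1 / c \<le> of_nat n" by (meson real_arch_simple)
  have "1 \<le> of_nat n * c" using n assms(4) by (simp add: field_simps)
  then have "sc 1 u \<le> sc (of_nat n * c) u" using sc_mono assms by blast
  moreover have "\<forall>p q x. sc (p * q) x = sc p (sc q x)" "\<forall>x. sc 1 x = x"
    using assms(1) unfolding riesz_Q_def by blast+
  ultimately have "u \<le> sc (of_nat n) (sc c u)" by simp
  then have "D u \<le> D (sc (of_nat n) (sc c u))" by (rule D_mono[OF assms(2)])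
  then have "D u \<le> D (sc c u)" using D_nat[OF assms(1,2), of n "sc c u"] by (rule order_trans)
  then show ?thesis using assms(2) unfolding spec_relations_def by (simp add: top_unique)
qed

lemma GH_top: assumes "riesz_Q sc" "spec_relations sc u D" "0 \<le> u" "(t::rat) < t'"
  shows "sup (D (sc t' u - f)) (D (f - sc t u)) = top"
proof -
  have "\<forall>p q x. sc (p + q) x = sc p x + sc q x" using assms(1) unfolding riesz_Q_def by blast
  then have "sc (t + (t'-t)) u = sc t u + sc (t'-t) u" by blast
  then have "sc t' u = sc t u + sc (t'-t) u" by simp
  then have "sc (t'-t) u = (sc t' u - f) + (f - sc t u)" by (simp add: algebra_simps)
  moreover have "\<forall>a b. D (a + b) \<le> sup (D a) (D b)" using assms(2) unfolding spec_relations_def by blast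
  ultimately have "D (sc (t'-t) u) \<le> sup (D (sc t' u - f)) (D (f - sc t u))" by metis
  then show ?thesis using D_pos_top[OF assms(1-3), of "t'-t"] assms(4) by (simp add: top_unique)
qed

lemma GH_bot: assumes "spec_relations sc u D"
  shows "inf (D (x - f)) (D (f - x)) = bot"
proof -
  have "f - x = - (x - f)" by simp
  moreover have "\<forall>a. inf (D a) (D (- a)) = bot" using assms unfolding spec_relations_def by blast
  ultimately show ?thesis by metis
qed

lemma lat_aux: fixes a :: "'l::{distrib_lattice,bounded_lattice}"
  assumes "sup a b = top" "sup e c = top" shows "top \<le> sup (sup a c) (inf b e)"
proof -
  have "top = inf (sup a b) (sup e c)" using assms by simp
  also have "\<dots> \<le> sup (sup a c) (inf b e)"
    by (simp add: inf_sup_distrib1 inf_sup_distrib2 le_supI1 le_supI2 inf.coboundedI1 inf.coboundedI2)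
  finally show ?thesis .
qed


lemma val_all: assumes "valuation sc u D \<mu>" shows "lower_real (\<mu> x) \<and> lr_of 0 \<subseteq> \<mu> x"
  using assms[unfolded valuation_def, THEN conjunct1] by (rule spec)
lemma val_lr: assumes "valuation sc u D \<mu>" shows "lower_real (\<mu> x)"
  using val_all[OF assms] by (rule conjunct1)
lemma val_neg: assumes "valuation sc u D \<mu>" shows "lr_of 0 \<subseteq> \<mu> x"
  using val_all[OF assms] by (rule conjunct2)
lemma val_bot: assumes "valuation sc u D \<mu>" shows "\<mu> bot = lr_of 0"
  using assms[unfolded valuation_def, THEN conjunct2, THEN conjunct1] .
lemma val_top: assumes "valuation sc u D \<mu>" shows "\<mu> top = lr_of 1"
  using assms[unfolded valuation_def, THEN conjunct2, THEN conjunct2, THEN conjunct1] .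
lemma val_mod: assumes "valuation sc u D \<mu>"
  shows "lr_add (\<mu> x) (\<mu> y) = lr_add (\<mu> (sup x y)) (\<mu> (inf x y))"
  using assms[unfolded valuation_def, THEN conjunct2, THEN conjunct2, THEN conjunct2, THEN conjunct1]
  by (elim allE)
lemma val_mono: assumes "valuation sc u D \<mu>" "x \<le> y" shows "\<mu> x \<subseteq> \<mu> y"
  using assms(1)[unfolded valuation_def, THEN conjunct2, THEN conjunct2, THEN conjunct2, THEN conjunct2, THEN conjunct1] assms(2)
  by blast

lemma val_sub: assumes "valuation sc u D \<mu>"
  shows "\<mu> (sup X Y) \<subseteq> lr_add (\<mu> X) (\<mu> Y)"
proof
  fix z assume z: "z \<in> \<mu> (sup X Y)"
  have lr: "lower_real (\<mu> (sup X Y))" and sub0: "lr_of 0 \<subseteq> \<mu> (inf X Y)"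
    using val_lr[OF assms] val_neg[OF assms] by auto
  obtain z' where z': "z' \<in> \<mu> (sup X Y)" "z < z'" using lr z unfolding lower_real_def by blast
  have "z - z' \<in> \<mu> (inf X Y)" using sub0 z' unfolding lr_of_def by auto
  moreover have "z = z' + (z - z')" by simp
  ultimately have "z \<in> lr_add (\<mu> (sup X Y)) (\<mu> (inf X Y))" using z'(1) unfolding lr_add_def
    by blast
  then show "z \<in> lr_add (\<mu> X) (\<mu> Y)" using val_mod[OF assms, of X Y] by simp
qed

lemma val_disj: assumes "valuation sc u D \<mu>" "inf X Y = bot"
  shows "lr_add (\<mu> X) (\<mu> Y) \<subseteq> \<mu> (sup X Y)"
proof
  fix z assume "z \<in> lr_add (\<mu> X) (\<mu> Y)"
  then have "z \<in> lr_add (\<mu> (sup X Y)) (lr_of 0)" using val_mod[OF assms(1), of X Y] val_bot[OF assms(1)] assms(2) by simp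
  then obtain a b where ab: "z = a + b" "a \<in> \<mu> (sup X Y)" "b < 0" unfolding lr_add_def lr_of_def by auto
  have lr: "lower_real (\<mu> (sup X Y))" using val_lr[OF assms(1)] .
  show "z \<in> \<mu> (sup X Y)" using lr ab unfolding lower_real_def by auto
qed

lemma val_lt: assumes "valuation sc u D \<mu>" "q \<notin> \<mu> X" "e \<in> \<mu> X" shows "e < q"
proof -
  have lr: "lower_real (\<mu> X)" using val_lr[OF assms(1)] .
  show ?thesis using lr assms(2,3) unfolding lower_real_def by (metis not_less_iff_gr_or_eq)
qed


lemma stepA:
  assumes R: "riesz_Q sc" and S: "spec_relations sc u D" and V: "valuation sc u D \<mu>"
    and u0: "0 \<le> u" and T: "\<And>i. (T::nat \<Rightarrow> rat) i \<le> T (Suc i)"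
    and M: "1 < of_nat M * q"
  shows "\<exists>i<M. q \<notin> \<mu> (inf (D (f - sc (T i) u)) (D (sc (T (Suc i)) u - f)))"
proof (rule ccontr)
  let ?B = "\<lambda>i. inf (D (f - sc (T i) u)) (D (sc (T (Suc i)) u - f))"
  assume "\<not> ?thesis"
  then have all: "\<And>i. i < M \<Longrightarrow> q \<in> \<mu> (?B i)" by blast
  have claim: "k \<le> M \<Longrightarrow> \<exists>X. X \<le> D (sc (T k) u - f) \<and> (\<forall>x. x < of_nat k * q \<longrightarrow> x \<in> \<mu> X)" for k
  proof (induction k)
    case 0
    have "\<mu> bot = lr_of 0" using val_bot[OF V] .
    then show ?case by (intro exI[of _ bot]) (auto simp: lr_of_def)
  next
    case (Suc k)
    then obtain X where X: "X \<le> D (sc (T k) u - f)" "\<forall>x. x < of_nat k * q \<longrightarrow> x \<in> \<mu> X" by auto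
    have GG: "D (sc (T k) u - f) \<le> D (sc (T (Suc k)) u - f)"
      using D_mono[OF S] sc_mono[OF R u0 T[of k]] by (simp add: diff_right_mono)
    have X1: "sup X (?B k) \<le> D (sc (T (Suc k)) u - f)"
      using X(1) GG by (meson inf.coboundedI2 le_supI order_trans order_refl)
    have "inf X (?B k) \<le> inf (D (sc (T k) u - f)) (D (f - sc (T k) u))"
      using X(1) by (meson inf.coboundedI1 inf_mono order_refl)
    then have dis: "inf X (?B k) = bot" using GH_bot[OF S] by (simp add: bot_unique)
    have qB: "q \<in> \<mu> (?B k)" using all Suc by simp
    have "\<forall>x. x < of_nat (Suc k) * q \<longrightarrow> x \<in> \<mu> (sup X (?B k))"
    proof (intro allI impI)
      fix x assume "x < of_nat (Suc k) * q"
      then have "x - q < of_nat k * q" by (simp add: algebra_simps)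
      then have "x - q \<in> \<mu> X" using X by auto
      moreover have "x = (x - q) + q" by simp
      ultimately have "x \<in> lr_add (\<mu> X) (\<mu> (?B k))" using qB unfolding lr_add_def
        by blast
      then show "x \<in> \<mu> (sup X (?B k))" using val_disj[OF V dis] by blast
    qed
    then show ?case using X1 by blast
  qed
  obtain X where "X \<le> D (sc (T M) u - f)" "\<forall>x. x < of_nat M * q \<longrightarrow> x \<in> \<mu> X"
    using claim by blast
  then have "1 \<in> \<mu> X" using M by auto
  moreover have "\<mu> X \<subseteq> \<mu> top" using val_mono[OF V] by simp
  moreover have "\<mu> top = lr_of 1" using val_top[OF V] .
  ultimately show False unfolding lr_of_def by auto
qed


theorem theorem4p12:
  fixes sc :: "rat \<Rightarrow> 'a::lattice_ab_group_add \<Rightarrow> 'a"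
    and u :: 'a
    and D :: "'a \<Rightarrow> 'l::{distrib_lattice,bounded_lattice}"
    and \<mu> :: "'l \<Rightarrow> rat set"
    and f :: 'a
  assumes "riesz_Q sc"
    and "strong_unit sc u"
    and "spec_relations sc u D"
    and "valuation sc u D \<mu>"
    and "0 \<le> f"
  shows "\<forall>N::nat. N \<ge> 1 \<longrightarrow> (\<forall>r s::rat. r < s \<longrightarrow>
           (\<exists>r' s'. r < r' \<and> r' < s' \<and> s' < s \<and>
              Delta_closed_lt sc u D \<mu> f r' s' (1 / of_nat N)))"
proof (intro allI impI)
  fix N :: nat and r s :: rat
  assume N: "N \<ge> 1" and rs: "r < s"
  have R: "riesz_Q sc" and S: "spec_relations sc u D" and V: "valuation sc u D \<mu>"
    using assms by auto
  have u0: "0 \<le> u" using assms(2) unfolding strong_unit_def by auto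
  define M :: nat where "M = 2*N+1"
  define d where "d = (s - r) / of_nat M"
  define T where "T = (\<lambda>i::nat. r + of_nat i * d)"
  define q :: rat where "q = 1 / (2 * of_nat N)"
  have d0: "0 < d" using rs unfolding d_def M_def by simp
  have Tm: "\<And>i. T i \<le> T (Suc i)" using d0 unfolding T_def by (simp add: algebra_simps)
  have Nq: "2 * of_nat N * q = 1" using N unfolding q_def by simp
  have q0: "0 < q" using N unfolding q_def by simp
  have Mq: "1 < of_nat M * q" using Nq q0 unfolding M_def by (simp add: algebra_simps)
  obtain i where i: "i < M"
    and qn: "q \<notin> \<mu> (inf (D (f - sc (T i) u)) (D (sc (T (Suc i)) u - f)))"
    using stepA[where T=T and f=f, OF R S V u0 Tm Mq] by blast
  define r' where "r' = T i + d/4"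
  define s' where "s' = T (Suc i) - d/4"
  have TM: "T M = s" unfolding T_def d_def M_def using rs by simp
  have "T (Suc i) \<le> T M" unfolding T_def using i d0
    by (simp add: mult_right_mono)
  then have s's: "s' < s" using TM d0 unfolding s'_def by simp
  have rr': "r < r'" using d0 unfolding r'_def T_def by (simp add: add_nonneg_pos)
  have r's': "r' < s'" using d0 unfolding r'_def s'_def T_def by (simp add: algebra_simps)
  let ?A = "D (sc r' u - f)" and ?C = "D (f - sc s' u)"
    and ?B = "D (f - sc (T i) u)" and ?E = "D (sc (T (Suc i)) u - f)"
  have t1: "sup ?A ?B = top" using GH_top[OF R S u0, of "T i" r' f] d0 unfolding r'_def by simp
  have t2: "sup ?E ?C = top" using GH_top[OF R S u0, of s' "T (Suc i)" f] d0 unfolding s'_def by simp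
  have topeq: "sup (sup ?A ?C) (inf ?B ?E) = top" using lat_aux[OF t1 t2] by (simp add: top_unique)
  have "\<mu> top = lr_of 1" using val_top[OF V] .
  then have "1 - q \<in> \<mu> (sup (sup ?A ?C) (inf ?B ?E))" using topeq q0 unfolding lr_of_def by simp
  then have "1 - q \<in> lr_add (\<mu> (sup ?A ?C)) (\<mu> (inf ?B ?E))" using val_sub[OF V] by blast
  then obtain w e where we: "1 - q = w + e" "w \<in> \<mu> (sup ?A ?C)" "e \<in> \<mu> (inf ?B ?E)"
    unfolding lr_add_def by blast
  have eq: "e < q" using val_lt[OF V qn we(3)] .
  have "w \<in> lr_add (\<mu> ?A) (\<mu> ?C)" using val_sub[OF V] we(2) by blast
  then obtain a c where ac: "w = a + c" "a \<in> \<mu> ?A" "c \<in> \<mu> ?C" unfolding lr_add_def by blast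
  have h1: "1 - a - c = q + e" using we(1) ac(1) by simp
  have h2: "2 * q = 1 / of_nat N" using Nq N by (simp add: field_simps)
  have "1 - a - c < 1 / of_nat N" using h1 h2 eq by linarith
  then have "Delta_closed_lt sc u D \<mu> f r' s' (1 / of_nat N)"
    unfolding Delta_closed_lt_def using ac by blast
  then show "\<exists>r' s'. r < r' \<and> r' < s' \<and> s' < s \<and> Delta_closed_lt sc u D \<mu> f r' s' (1 / of_nat N)"
    using rr' r's' s's by blast
qed

end
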